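(* Let $t\ge2$, let $\kappa$ be a $t$-core with $n$-vector $(n_0,n_1,\dots,n_{t-1})$, and let $a\in\{0,1\}$. If $t\equiv 1+2a\pmod4$, then \[ \mathrm{srank}(\kappa)\equiv\sum_{i=0}^{t-1}\bigl(n_i+(1-2a)i+a\bigr)^3\pmod4; \] and if $t\equiv 2a\pmod 4$, then \[ \mathrm{srank}(\kappa)\equiv\sum_{i=0}^{t-1}\bigl(a n_i^2+(i^2+i)n_i\bigr)\pmod4. \]
   Context: For a partition $\pi$, $\pi'$ is its conjugate, $\mathcal O(\pi)$ the number of odd parts, and $\mathrm{srank}(\pi)=\mathcal O(\pi)-\mathcal O(\pi')$. A $t$-core is a partition with no rim hook (border strip) of length $t$. In the Young diagram, the cell in row $a'$ and column $b'$ is labelled by the residue of $b'-a'$ modulo $t$. For a $t$-core $\kappa$, let $r_i$ ($0\le i\le t-1$) be the number of cells of $\kappa$ labelled $i$; its $n$-vector is $(n_0,\dots,n_{t-1})=(r_0-r_1,r_1-r_2,\dots,r_{t-2}-r_{t-1},r_{t-1}-r_0)$. *)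

theory Defs
  imports Main
begin

definition is_partition :: "nat list \<Rightarrow> bool" where
  "is_partition ps \<longleftrightarrow> sorted_wrt (\<ge>) ps \<and> (\<forall>p\<in>set ps. 0 < p)"

text \<open>Young diagram: cell (i,j) (0-indexed row i, column j) belongs to the diagram iff j < part i.
  Residue b'-a' with 1-indexed rows/columns equals j-i.\<close>
definition cells :: "nat list \<Rightarrow> (nat \<times> nat) set" where
  "cells ps = {(i, j). i < length ps \<and> j < ps ! i}"

definition conj_part :: "nat list \<Rightarrow> nat list" where
  "conj_part ps = map (\<lambda>j. length (filter (\<lambda>p. j < p) ps)) [0..<(if ps = [] then 0 else hd ps)]"

definition num_odd :: "nat list \<Rightarrow> nat" where
  "num_odd ps = length (filter odd ps)"

definition srank :: "nat list \<Rightarrow> int" where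
  "srank ps = int (num_odd ps) - int (num_odd (conj_part ps))"

definition cell_adj :: "nat \<times> nat \<Rightarrow> nat \<times> nat \<Rightarrow> bool" where
  "cell_adj x y \<longleftrightarrow> \<bar>int (fst x) - int (fst y)\<bar> + \<bar>int (snd x) - int (snd y)\<bar> = 1"

definition cells_connected :: "(nat \<times> nat) set \<Rightarrow> bool" where
  "cells_connected S \<longleftrightarrow>
     (\<forall>x\<in>S. \<forall>y\<in>S. (x, y) \<in> {(u, v). u \<in> S \<and> v \<in> S \<and> cell_adj u v}\<^sup>*)"

definition no_2x2 :: "(nat \<times> nat) set \<Rightarrow> bool" where
  "no_2x2 S \<longleftrightarrow> \<not> (\<exists>i j. (i, j) \<in> S \<and> (Suc i, j) \<in> S \<and> (i, Suc j) \<in> S \<and> (Suc i, Suc j) \<in> S)"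

definition rim_hook :: "nat list \<Rightarrow> (nat \<times> nat) set \<Rightarrow> bool" where
  "rim_hook ps S \<longleftrightarrow> S \<noteq> {} \<and> S \<subseteq> cells ps \<and>
     (\<exists>mu. is_partition mu \<and> cells mu = cells ps - S) \<and>
     cells_connected S \<and> no_2x2 S"

definition is_core :: "nat \<Rightarrow> nat list \<Rightarrow> bool" where
  "is_core t ps \<longleftrightarrow> is_partition ps \<and> \<not> (\<exists>S. rim_hook ps S \<and> card S = t)"

definition res_count :: "nat \<Rightarrow> nat list \<Rightarrow> nat \<Rightarrow> nat" where
  "res_count t ps i = card {(a, b) \<in> cells ps. (int b - int a) mod int t = int i}"

definition nvec :: "nat \<Rightarrow> nat list \<Rightarrow> nat \<Rightarrow> int" where
  "nvec t ps i = int (res_count t ps i) - int (res_count t ps ((i + 1) mod t))"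

end

theory Submission
  imports Defs "HOL-Number_Theory.Cong"
begin


definition lam :: "nat list \<Rightarrow> nat \<Rightarrow> nat" where
  "lam ps a = (if a < length ps then ps ! a else 0)"

definition bet :: "nat list \<Rightarrow> nat \<Rightarrow> int" where
  "bet ps a = int (lam ps a) - int a - 1"

lemma lam_antimono:
  assumes "is_partition ps" "a \<le> b"
  shows "lam ps b \<le> lam ps a"
proof (cases "b < length ps")
  case True
  show ?thesis
  proof (cases "a = b")
    case False
    with assms(2) have "a < b" by simp
    with True assms(1) show ?thesis
      unfolding is_partition_def lam_def by (auto simp: sorted_wrt_iff_nth_less)
  qed simp
qed (simp add: lam_def)

lemma lam_pos: "is_partition ps \<Longrightarrow> a < length ps \<Longrightarrow> 0 < lam ps a"
  unfolding is_partition_def lam_def by auto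

lemma lam_pos_iff: "is_partition ps \<Longrightarrow> 0 < lam ps a \<longleftrightarrow> a < length ps"
  using lam_pos[of ps a] by (auto simp: lam_def)

lemma cells_lam: "cells ps = {(i, j). j < lam ps i}"
  unfolding cells_def lam_def by (auto split: if_splits)

lemma cells_Sigma: "cells ps = Sigma {..<length ps} (\<lambda>i. {..<lam ps i})"
  unfolding cells_def lam_def by (auto split: if_splits)

lemma finite_cells[simp]: "finite (cells ps)"
  unfolding cells_Sigma by auto

lemma bet_ge: "bet ps a \<ge> - int a - 1"
  by (simp add: bet_def)

lemma bet_big: "length ps \<le> a \<Longrightarrow> bet ps a = - int a - 1"
  by (simp add: bet_def lam_def)

lemma bet_strict: "is_partition ps \<Longrightarrow> a < b \<Longrightarrow> bet ps b < bet ps a"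
  using lam_antimono[of ps a b] by (simp add: bet_def)

lemma bet_inj: "is_partition ps \<Longrightarrow> inj (bet ps)"
  by (metis bet_strict injI less_irrefl nat_neq_iff)

lemma bet_le: "is_partition ps \<Longrightarrow> a \<le> b \<Longrightarrow> bet ps b \<le> bet ps a"
  by (metis bet_strict order_le_less order_refl)

lemma range_low: "y < - int (length ps) \<Longrightarrow> y \<in> range (bet ps)"
proof -
  assume y: "y < - int (length ps)"
  have "bet ps (nat (- y - 1)) = y" using y by (subst bet_big) auto
  then show ?thesis by (metis rangeI)
qed



lemma partition_of_fun:
  fixes f :: "nat \<Rightarrow> nat"
  assumes anti: "\<And>r. f (Suc r) \<le> f r" and zero: "\<And>r. N \<le> r \<Longrightarrow> f r = 0"
  shows "\<exists>mu. is_partition mu \<and> cells mu = {(r, j). j < f r}"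
proof -
  define k where "k = (LEAST r. f r = 0)"
  have fk: "f k = 0" unfolding k_def by (rule LeastI[of _ N]) (simp add: zero)
  have nz: "r < k \<Longrightarrow> f r \<noteq> 0" for r unfolding k_def using not_less_Least by blast
  have am: "r \<le> r' \<Longrightarrow> f r' \<le> f r" for r r'
    using lift_Suc_antimono_le[of f r r'] anti by blast
  define mu where "mu = map f [0..<k]"
  have "is_partition mu"
    unfolding is_partition_def mu_def
    using am nz by (auto simp: sorted_wrt_iff_nth_less)
  moreover have "cells mu = {(r, j). j < f r}"
  proof -
    have "j < f r \<Longrightarrow> r < k" for r j
    proof (rule ccontr)
      assume "j < f r" "\<not> r < k"
      then have "f r \<le> f k" using am by simp
      with fk \<open>j < f r\<close> show False by simp
    qed
    then show ?thesis unfolding cells_def mu_def by auto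
  qed
  ultimately show ?thesis by blast
qed

lemma core_flush:
  assumes core: "is_core t ps" and t: "t \<ge> 1"
  shows "\<exists>b. bet ps b = bet ps a - int t"
proof (rule ccontr)
  assume nf: "\<nexists>b. bet ps b = bet ps a - int t"
  have P: "is_partition ps" using core is_core_def by blast
  define m where "m = length ps"
  define x where "x = bet ps a"
  define y where "y = x - int t"
  have ybet: "bet ps b \<noteq> y" for b using nf unfolding y_def x_def by blast
  have a_m: "a < m"
  proof (rule ccontr)
    assume "\<not> a < m"
    then have "bet ps (a + t) = y" unfolding y_def x_def m_def
      by (simp add: bet_big)
    with ybet show False by blast
  qed
  have y_ge: "y \<ge> - int m"
    using range_low[of y ps] ybet unfolding m_def by (metis imageE not_less)
  have ex: "bet ps m < y" using y_ge by (simp add: bet_big m_def)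
  define c where "c = (LEAST k. bet ps k < y)"
  have c1: "bet ps c < y" unfolding c_def by (rule LeastI[of _ m]) (rule ex)
  have c2: "k < c \<Longrightarrow> y \<le> bet ps k" for k unfolding c_def using not_less_Least by (metis not_less)
  have ac: "a < c"
  proof (rule ccontr)
    assume "\<not> a < c"
    then have "bet ps a \<le> bet ps c" using bet_le[OF P] by simp
    then show False using c1 t unfolding y_def x_def by simp
  qed
  have cm: "c \<le> m" unfolding c_def by (rule Least_le) (rule ex)
  have c0: "c = Suc (c - 1)" using ac by simp
  have c3: "y < bet ps (c - 1)"
    using c2[of "c - 1"] ybet[of "c - 1"] ac by fastforce
  define e where "e = nat (y + int c)"
  have lamc: "int (lam ps c) \<le> y + int c" using c1 by (simp add: bet_def)
  have lamc1: "y + int c < int (lam ps (c - 1))" using c3 ac by (simp add: bet_def)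
  have e1: "e < lam ps (c - 1)" using lamc1 lamc unfolding e_def by linarith
  have e2: "lam ps c \<le> e" using lamc unfolding e_def by linarith
  have lampos: "r < c \<Longrightarrow> 1 \<le> lam ps r" for r
    using lam_pos[OF P, of r] cm unfolding m_def by simp
  define lo where "lo r = (if Suc r < c then lam ps (Suc r) - 1 else e)" for r
  define S where "S = Sigma {a..<c} (\<lambda>r. {lo r..<lam ps r})"
  define mu where "mu r = (if a \<le> r \<and> r < c then lo r else lam ps r)" for r
  have lo_lt: "r < c \<Longrightarrow> lo r < lam ps r" for r
  proof -
    assume rc: "r < c"
    show ?thesis
    proof (cases "Suc r < c")
      case True
      then show ?thesis using lampos[of "Suc r"] lam_antimono[OF P, of r "Suc r"]
        unfolding lo_def by simp
    next
      case False
      then have "r = c - 1" using rc by simp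
      then show ?thesis using e1 False unfolding lo_def by simp
    qed
  qed
  have mu_anti: "mu (Suc r) \<le> mu r" for r
  proof -
    consider "Suc r < a" | "Suc r = a" | "a \<le> r \<and> Suc r < c" | "a \<le> r \<and> Suc r = c" | "c \<le> r"
      using ac by linarith
    then show ?thesis
    proof cases
      case 1 then show ?thesis unfolding mu_def using lam_antimono[OF P, of r "Suc r"] by simp
    next
      case 2 then show ?thesis unfolding mu_def using lam_antimono[OF P, of r "Suc r"] lo_lt[of "Suc r"] ac by simp
    next
      case 3
      have "lo (Suc r) < lam ps (Suc r)" using lo_lt 3 by simp
      then show ?thesis unfolding mu_def using 3 by (simp add: lo_def)
    next
      case 4 then show ?thesis unfolding mu_def lo_def using e2 by simp
    next
      case 5 then show ?thesis unfolding mu_def using lam_antimono[OF P, of r "Suc r"] by simp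
    qed
  qed
  have mu_zero: "m \<le> r \<Longrightarrow> mu r = 0" for r
    using cm unfolding mu_def by (simp add: lam_def m_def)
  have diff: "cells ps - S = {(r, j). j < mu r}"
  proof (safe)
    fix r j assume "(r, j) \<in> cells ps" "(r, j) \<notin> S"
    then show "j < mu r" unfolding cells_lam S_def mu_def by auto
  next
    fix r j assume "j < mu r"
    then show "(r, j) \<in> cells ps" unfolding cells_lam mu_def using lo_lt
      by (auto split: if_splits) (meson order.strict_trans)
  next
    fix r j assume "j < mu r" "(r, j) \<in> S"
    then show False unfolding S_def mu_def by (auto split: if_splits)
  qed
  obtain mu' where mu': "is_partition mu'" "cells mu' = cells ps - S"
    using partition_of_fun[of mu m] mu_anti mu_zero diff by metis
  have Ssub: "S \<subseteq> cells ps"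
    unfolding S_def cells_lam by auto
  have tele: "a \<le> k \<Longrightarrow> k < c \<Longrightarrow>
      (\<Sum>r\<in>{a..<k}. int (lam ps r) - int (lo r)) = int (lam ps a) - int (lam ps k) + int (k - a)" for k
  proof (induction k rule: dec_induct)
    case base then show ?case by simp
  next
    case (step k)
    have "Suc k < c" using step by simp
    then have "lo k = lam ps (Suc k) - 1" unfolding lo_def by simp
    moreover have "1 \<le> lam ps (Suc k)" using lampos \<open>Suc k < c\<close> by simp
    ultimately show ?case using step by (simp add: Suc_diff_le)
  qed
  have cardS: "card S = t"
  proof -
    have "card S = (\<Sum>r\<in>{a..<c}. card {lo r..<lam ps r})"
      unfolding S_def by (simp add: card_SigmaI)
    also have "\<dots> = (\<Sum>r\<in>{a..<c}. lam ps r - lo r)" by simp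
    finally have "int (card S) = (\<Sum>r\<in>{a..<c}. int (lam ps r - lo r))" by simp
    also have "\<dots> = (\<Sum>r\<in>{a..<c}. int (lam ps r) - int (lo r))"
      using lo_lt by (intro sum.cong) (auto simp: of_nat_diff less_imp_le)
    also have "\<dots> = (\<Sum>r\<in>{a..<c - 1}. int (lam ps r) - int (lo r)) + (int (lam ps (c - 1)) - int (lo (c - 1)))"
    proof -
      have "{a..<c} = {a..<Suc (c - 1)}" using ac by simp
      then show ?thesis using ac sum.atLeastLessThan_Suc[of a "c - 1" "\<lambda>r. int (lam ps r) - int (lo r)"]
        by simp
    qed
    also have "\<dots> = int (lam ps a) - int (lam ps (c - 1)) + int (c - 1 - a) + (int (lam ps (c - 1)) - int e)"
      using tele[of "c - 1"] ac by (simp add: lo_def)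
    also have "\<dots> = int t"
      using ac lamc unfolding e_def y_def x_def by (simp add: bet_def of_nat_diff)
    finally show ?thesis by simp
  qed
  have no2: "no_2x2 S"
    unfolding no_2x2_def
  proof (clarify)
    fix i j assume h: "(i, j) \<in> S" "(Suc i, j) \<in> S" "(i, Suc j) \<in> S" "(Suc i, Suc j) \<in> S"
    then have "Suc i < c" "lo i \<le> j" "Suc j < lam ps (Suc i)" unfolding S_def by auto
    then show False unfolding lo_def by simp
  qed
  define R where "R = {(u, v). u \<in> S \<and> v \<in> S \<and> cell_adj u v}"
  define z where "z = (c - 1, e)"
  have zS: "z \<in> S" unfolding z_def S_def lo_def using ac e1 by auto
  have row: "a \<le> r \<Longrightarrow> r < c \<Longrightarrow> lo r + n < lam ps r \<Longrightarrow> ((r, lo r + n), (r, lo r)) \<in> R\<^sup>*" for r n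
  proof (induction n)
    case 0 then show ?case by simp
  next
    case (Suc n)
    have "((r, lo r + Suc n), (r, lo r + n)) \<in> R"
      unfolding R_def S_def cell_adj_def using Suc.prems by auto
    moreover have "((r, lo r + n), (r, lo r)) \<in> R\<^sup>*" using Suc by simp
    ultimately show ?case by (rule converse_rtrancl_into_rtrancl)
  qed
  have reach: "a \<le> r \<Longrightarrow> r < c \<Longrightarrow> ((r, lo r), z) \<in> R\<^sup>*" for r
  proof (induction "c - 1 - r" arbitrary: r)
    case 0
    then have "r = c - 1" by simp
    then show ?case unfolding z_def lo_def using ac by simp
  next
    case (Suc d)
    then have rc: "Suc r < c" by simp
    have l1: "lo r = lam ps (Suc r) - 1" using rc unfolding lo_def by simp
    have "lo (Suc r) < lam ps (Suc r)" using lo_lt rc by simp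
    then obtain n where n: "lam ps (Suc r) - 1 = lo (Suc r) + n"
      by (metis le_add_diff_inverse less_Suc_eq_le Suc_pred' gr_implies_not0 not_less0 neq0_conv)
    have "lam ps (Suc r) \<ge> 1" using lampos rc by simp
    have e1': "((r, lo r), (Suc r, lo r)) \<in> R"
      unfolding R_def S_def cell_adj_def using Suc.prems rc l1 lo_lt[of r] lo_lt[of "Suc r"]
        \<open>lam ps (Suc r) \<ge> 1\<close> by auto
    have "((Suc r, lo (Suc r) + n), (Suc r, lo (Suc r))) \<in> R\<^sup>*"
      using row[of "Suc r" n] Suc.prems rc n \<open>lam ps (Suc r) \<ge> 1\<close> by simp
    moreover have "((Suc r, lo (Suc r)), z) \<in> R\<^sup>*"
      using Suc.hyps(1)[of "Suc r"] Suc.hyps(2) Suc.prems rc by simp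
    ultimately have "((Suc r, lo r), z) \<in> R\<^sup>*" using n l1 by (metis rtrancl_trans)
    with e1' show ?case by (meson converse_rtrancl_into_rtrancl)
  qed
  have toz: "u \<in> S \<Longrightarrow> (u, z) \<in> R\<^sup>*" for u
  proof -
    assume "u \<in> S"
    then obtain r j where u: "u = (r, j)" "a \<le> r" "r < c" "lo r \<le> j" "j < lam ps r"
      unfolding S_def by auto
    then obtain n where "j = lo r + n" by (metis le_add_diff_inverse)
    then show ?thesis using row[of r n] reach[of r] u by (metis rtrancl_trans)
  qed
  have Rsym: "R\<inverse> = R" unfolding R_def cell_adj_def by auto
  have conn: "cells_connected S"
    unfolding cells_connected_def
  proof (intro ballI)
    fix u v assume "u \<in> S" "v \<in> S"
    have "(u, z) \<in> R\<^sup>*" using toz \<open>u \<in> S\<close> by simp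
    moreover have "(z, v) \<in> R\<^sup>*"
      using rtrancl_converseI[OF toz[OF \<open>v \<in> S\<close>]] Rsym by simp
    ultimately show "(u, v) \<in> {(u, v). u \<in> S \<and> v \<in> S \<and> cell_adj u v}\<^sup>*"
      unfolding R_def[symmetric] by (rule rtrancl_trans)
  qed
  have "rim_hook ps S"
    unfolding rim_hook_def using zS Ssub mu' conn no2 by blast
  with cardS core show False unfolding is_core_def by blast
qed



lemma row_sum:
  fixes G f :: "int \<Rightarrow> int"
  assumes G: "\<And>y. G y - G (y - 1) = f y"
  shows "(\<Sum>j<n. f (int j - int i)) = G (int n - int i - 1) - G (- int i - 1)"
proof (induction n)
  case 0 then show ?case by simp
next
  case (Suc n)
  have "f (int n - int i) = G (int n - int i) - G (int n - int i - 1)" using G by simp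
  then show ?case using Suc by simp
qed

lemma cells_sum:
  fixes G f :: "int \<Rightarrow> int"
  assumes P: "is_partition ps" and M: "length ps \<le> M"
    and G: "\<And>y. G y - G (y - 1) = f y"
  shows "(\<Sum>(i, j)\<in>cells ps. f (int j - int i)) = (\<Sum>i<M. G (bet ps i) - G (- int i - 1))"
proof -
  have "cells ps = Sigma {..<M} (\<lambda>i. {..<lam ps i})"
    unfolding cells_lam using M by (auto simp: lam_def split: if_splits)
  then have "(\<Sum>(i, j)\<in>cells ps. f (int j - int i)) = (\<Sum>i<M. \<Sum>j<lam ps i. f (int j - int i))"
    by (simp add: sum.Sigma)
  also have "\<dots> = (\<Sum>i<M. G (bet ps i) - G (- int i - 1))"
    by (intro sum.cong refl) (simp add: row_sum[where G=G and f=f, OF G] bet_def)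
  finally show ?thesis .
qed

lemma levels:
  assumes P: "is_partition ps" and flush: "\<And>a. \<exists>b. bet ps b = bet ps a - int t"
    and t: "t > 0" and K: "K \<ge> int (length ps) + 1" and rho: "\<rho> < t"
  shows "\<exists>L. - K < L \<and> {q. - K \<le> q \<and> int \<rho> + int t * q \<in> range (bet ps)} = {- K..<L}"
proof -
  define Q where "Q = {q. - K \<le> q \<and> int \<rho> + int t * q \<in> range (bet ps)}"
  have mK: "- K \<in> Q"
  proof -
    have h1: "int t * K \<ge> int t * (int (length ps) + 1)" using t K by simp
    have h2: "int t * int (length ps) \<ge> int (length ps)" using t
      by (metis mult_le_mono1 mult_1 of_nat_le_iff of_nat_mult Suc_leI One_nat_def)
    have "int t * (int (length ps) + 1) = int t * int (length ps) + int t" by (simp add: algebra_simps)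
    then have "int \<rho> + int t * (- K) < - int (length ps)" using rho h1 h2 by simp
    then show ?thesis unfolding Q_def using range_low by auto
  qed
  have down: "q \<in> Q \<Longrightarrow> - K \<le> q' \<Longrightarrow> q' \<le> q \<Longrightarrow> q' \<in> Q" for q q'
  proof (induction "nat (q - q')" arbitrary: q)
    case 0 then show ?case by simp
  next
    case (Suc d)
    then obtain b where b: "bet ps b = int \<rho> + int t * q" unfolding Q_def by auto
    obtain b' where "bet ps b' = bet ps b - int t" using flush by blast
    then have "int \<rho> + int t * (q - 1) \<in> range (bet ps)" using b
      by (metis add_diff_eq mult.right_neutral right_diff_distrib' rangeI)
    then have "q - 1 \<in> Q" unfolding Q_def using Suc by auto
    then show ?case using Suc.hyps(1)[of "q - 1"] Suc.hyps(2) Suc.prems by simp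
  qed
  have bound: "Q \<subseteq> {- K..\<bar>bet ps 0\<bar>}"
  proof
    fix q assume "q \<in> Q"
    then obtain b where b: "bet ps b = int \<rho> + int t * q" and qK: "- K \<le> q" unfolding Q_def by auto
    have "bet ps b \<le> bet ps 0" using bet_le[OF P] by simp
    have "q \<le> \<bar>bet ps 0\<bar>"
    proof (cases "q \<le> 0")
      case False
      then have "q \<le> int t * q" using t by (simp add: mult_le_cancel_right1)
      then show ?thesis using b \<open>bet ps b \<le> bet ps 0\<close> by linarith
    qed simp
    then show "q \<in> {- K..\<bar>bet ps 0\<bar>}" using qK by simp
  qed
  have fin: "finite Q" using bound finite_subset by blast
  define L where "L = Max Q + 1"
  have "Q = {- K..<L}"
  proof
    show "Q \<subseteq> {- K..<L}" unfolding L_def using fin Q_def by auto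
    show "{- K..<L} \<subseteq> Q"
    proof
      fix q assume "q \<in> {- K..<L}"
      then show "q \<in> Q" using down[of "Max Q" q] Max_in[OF fin] mK unfolding L_def by auto
    qed
  qed
  moreover have "- K < L" unfolding L_def using Max_ge[OF fin mK] by simp
  ultimately show ?thesis unfolding Q_def by blast
qed

lemma sum_levels:
  fixes ps :: "nat list" and t M :: nat and K :: int and L :: "nat \<Rightarrow> int" and G :: "int \<Rightarrow> int"
  assumes P: "is_partition ps" and t: "t > 0" and K: "K \<ge> int (length ps) + 1"
    and M: "M = t * nat K"
    and L: "\<And>\<rho>. \<rho> < t \<Longrightarrow> {q. - K \<le> q \<and> int \<rho> + int t * q \<in> range (bet ps)} = {- K..<L \<rho>}"
  shows "(\<Sum>a<M. G (bet ps a)) = (\<Sum>\<rho><t. \<Sum>q\<in>{- K..<L \<rho>}. G (int \<rho> + int t * q))"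
proof -
  define \<phi> where "\<phi> = (\<lambda>(\<rho>::nat, q::int). int \<rho> + int t * q)"
  define A where "A = Sigma {..<t} (\<lambda>\<rho>. {- K..<L \<rho>})"
  have MK: "int M = int t * K" using M K by simp
  have injphi: "inj_on \<phi> A"
  proof (rule inj_onI)
    fix u v assume "u \<in> A" "v \<in> A" "\<phi> u = \<phi> v"
    then obtain r1 q1 r2 q2 where uv: "u = (r1, q1)" "v = (r2, q2)" "r1 < t" "r2 < t"
      and eq: "int r1 + int t * q1 = int r2 + int t * q2" unfolding A_def \<phi>_def by auto
    have "(int r1 + int t * q1) mod int t = int r1" using uv t by simp
    moreover have "(int r2 + int t * q2) mod int t = int r2" using uv t by simp
    ultimately have "r1 = r2" using eq by simp
    then have "q1 = q2" using eq t by simp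
    then show "u = v" using uv \<open>r1 = r2\<close> by simp
  qed
  have img: "bet ps ` {..<M} = \<phi> ` A"
  proof
    show "bet ps ` {..<M} \<subseteq> \<phi> ` A"
    proof
      fix y assume "y \<in> bet ps ` {..<M}"
      then obtain a where a: "a < M" "y = bet ps a" by auto
      define \<rho> where "\<rho> = nat (y mod int t)"
      define q where "q = y div int t"
      have yr: "y = int \<rho> + int t * q" unfolding \<rho>_def q_def using t by simp
      have r: "\<rho> < t" unfolding \<rho>_def using t by (simp add: nat_less_iff)
      have "y \<ge> - int M" using bet_ge[where ps=ps and a=a] a by simp
      then have "y \<ge> int t * (- K)" using MK by simp
      then have "(int t * (- K)) div int t \<le> q" unfolding q_def using t
        by (intro zdiv_mono1) auto
      moreover have "(int t * (- K)) div int t = - K" using t by (metis nonzero_mult_div_cancel_left of_nat_0_less_iff less_irrefl)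
      ultimately have "q \<ge> - K" by simp
      then have "q \<in> {q. - K \<le> q \<and> int \<rho> + int t * q \<in> range (bet ps)}" using yr a by (auto intro: range_eqI[of _ _ a])
      then have "q \<in> {- K..<L \<rho>}" using L[OF r] by blast
      then show "y \<in> \<phi> ` A" unfolding A_def \<phi>_def using r yr by force
    qed
    show "\<phi> ` A \<subseteq> bet ps ` {..<M}"
    proof
      fix y assume "y \<in> \<phi> ` A"
      then obtain \<rho> q where r: "\<rho> < t" "q \<in> {- K..<L \<rho>}" "y = int \<rho> + int t * q"
        unfolding A_def \<phi>_def by auto
      then have "q \<in> {q. - K \<le> q \<and> int \<rho> + int t * q \<in> range (bet ps)}" using L by blast
      then obtain a where a: "bet ps a = y" and qK: "- K \<le> q" using r by auto
      have "a < M"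
      proof (rule ccontr)
        assume "\<not> a < M"
        moreover have "length ps \<le> M"
        proof -
          have "length ps \<le> nat K" using K by linarith
          also have "\<dots> \<le> t * nat K" using t by simp
          finally show ?thesis using M by simp
        qed
        ultimately have "bet ps a = - int a - 1" using bet_big by simp
        moreover have "int t * q \<ge> int t * (- K)" using qK by (intro mult_left_mono) auto
        ultimately show False using a r MK \<open>\<not> a < M\<close> by simp
      qed
      then show "y \<in> bet ps ` {..<M}" using a by auto
    qed
  qed
  have "(\<Sum>a<M. G (bet ps a)) = sum G (bet ps ` {..<M})"
    using bet_inj[OF P] by (simp add: sum.reindex inj_on_subset)
  also have "\<dots> = sum G (\<phi> ` A)" using img by simp
  also have "\<dots> = sum (G \<circ> \<phi>) A" using injphi by (simp add: sum.reindex)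
  also have "\<dots> = (\<Sum>\<rho><t. \<Sum>q\<in>{- K..<L \<rho>}. G (int \<rho> + int t * q))"
    unfolding A_def \<phi>_def by (simp add: sum.Sigma split_def)
  finally show ?thesis .
qed



lemma bet_nil: "bet [] a = - int a - 1"
  by (simp add: bet_def lam_def)

lemma core_sum:
  assumes core: "is_core t ps" and t: "t \<ge> 2"
  shows "\<exists>K L. 0 \<le> K \<and> (\<forall>\<rho><t. - K \<le> L \<rho>) \<and> (\<Sum>\<rho><t. L \<rho>) = 0 \<and>
    (\<forall>(f::int \<Rightarrow> int) G. (\<forall>y. G y - G (y - 1) = f y) \<longrightarrow>
      (\<Sum>(i, j)\<in>cells ps. f (int j - int i)) =
      (\<Sum>\<rho><t. (\<Sum>q\<in>{- K..<L \<rho>}. G (int \<rho> + int t * q)) - (\<Sum>q\<in>{- K..<0}. G (int \<rho> + int t * q))))"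
proof -
  have P: "is_partition ps" using core is_core_def by blast
  have t0: "t > 0" using t by simp
  define K where "K = int (length ps) + 1"
  define M where "M = t * nat K"
  have flush: "\<And>a. \<exists>b. bet ps b = bet ps a - int t" using core_flush[OF core] t by simp
  define L where "L \<rho> = (SOME L. - K < L \<and> {q. - K \<le> q \<and> int \<rho> + int t * q \<in> range (bet ps)} = {- K..<L})" for \<rho>
  have L: "- K < L \<rho> \<and> {q. - K \<le> q \<and> int \<rho> + int t * q \<in> range (bet ps)} = {- K..<L \<rho>}" if "\<rho> < t" for \<rho>
    unfolding L_def by (rule someI_ex) (rule levels[OF P flush t0 _ that], simp add: K_def)
  have Pnil: "is_partition []" by (simp add: is_partition_def)
  have Lnil: "{q. - K \<le> q \<and> int \<rho> + int t * q \<in> range (bet [])} = {- K..<0}" if "\<rho> < t" for \<rho>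
  proof -
    have rng: "range (bet []) = {y. y < 0}"
    proof
      show "range (bet []) \<subseteq> {y. y < 0}" by (auto simp: bet_nil)
      show "{y. y < 0} \<subseteq> range (bet [])"
      proof
        fix y :: int assume "y \<in> {y. y < 0}"
        then have "bet [] (nat (- y - 1)) = y" by (simp add: bet_nil)
        then show "y \<in> range (bet [])" by (metis rangeI)
      qed
    qed
    have "int \<rho> + int t * q < 0 \<longleftrightarrow> q < 0" for q
    proof
      assume "int \<rho> + int t * q < 0"
      then show "q < 0" using t0 by (smt (verit) mult_nonneg_nonneg of_nat_0_le_iff)
    next
      assume "q < 0"
      then have "int t * q \<le> int t * (-1)" using t0 by (intro mult_left_mono) auto
      then show "int \<rho> + int t * q < 0" using that by simp
    qed
    then show ?thesis using rng by auto
  qed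
  have len: "length ps \<le> M"
  proof -
    have "length ps \<le> nat K" unfolding K_def by linarith
    also have "\<dots> \<le> t * nat K" using t0 by simp
    finally show ?thesis unfolding M_def .
  qed
  have SL: "(\<Sum>a<M. G (bet ps a)) = (\<Sum>\<rho><t. \<Sum>q\<in>{- K..<L \<rho>}. G (int \<rho> + int t * q))" for G :: "int \<Rightarrow> int"
    by (rule sum_levels[OF P t0 _ M_def]) (use L in \<open>auto simp: K_def\<close>)
  have SN: "(\<Sum>a<M. G (bet [] a)) = (\<Sum>\<rho><t. \<Sum>q\<in>{- K..<0}. G (int \<rho> + int t * q))" for G :: "int \<Rightarrow> int"
    by (rule sum_levels[OF Pnil t0 _ M_def]) (use Lnil in \<open>auto simp: K_def\<close>)
  have sumL: "(\<Sum>\<rho><t. L \<rho>) = 0"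
  proof -
    have "int M = (\<Sum>\<rho><t. \<Sum>q\<in>{- K..<L \<rho>}. 1)" using SL[of "\<lambda>_. 1"] by simp
    also have "\<dots> = (\<Sum>\<rho><t. L \<rho> + K)"
      using L by (intro sum.cong refl) (simp, smt (verit) lessThan_iff)
    also have "\<dots> = (\<Sum>\<rho><t. L \<rho>) + int t * K" by (simp add: sum.distrib)
    finally show ?thesis unfolding M_def K_def by simp
  qed
  have main: "(\<Sum>(i, j)\<in>cells ps. f (int j - int i)) =
      (\<Sum>\<rho><t. (\<Sum>q\<in>{- K..<L \<rho>}. G (int \<rho> + int t * q)) - (\<Sum>q\<in>{- K..<0}. G (int \<rho> + int t * q)))"
    if G: "\<forall>y. G y - G (y - 1) = f y" for f G :: "int \<Rightarrow> int"
  proof -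
    have "(\<Sum>(i, j)\<in>cells ps. f (int j - int i)) = (\<Sum>i<M. G (bet ps i) - G (- int i - 1))"
      by (rule cells_sum[OF P len]) (use G in auto)
    also have "\<dots> = (\<Sum>i<M. G (bet ps i)) - (\<Sum>i<M. G (bet [] i))"
      by (simp add: sum_subtractf bet_nil)
    also have "\<dots> = (\<Sum>\<rho><t. (\<Sum>q\<in>{- K..<L \<rho>}. G (int \<rho> + int t * q)) - (\<Sum>q\<in>{- K..<0}. G (int \<rho> + int t * q)))"
      by (simp add: SL SN sum_subtractf)
    finally show ?thesis .
  qed
  have "0 \<le> K" unfolding K_def by simp
  moreover have "\<forall>\<rho><t. - K \<le> L \<rho>" using L by (simp add: less_imp_le)
  ultimately show ?thesis using sumL main by blast
qed



lemma divstep: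
  fixes z t :: int assumes t: "t > 0"
  shows "z div t - (z - 1) div t = (if z mod t = 0 then 1 else 0)"
proof -
  have z: "z = t * (z div t) + z mod t" by simp
  have m: "0 \<le> z mod t" "z mod t < t" using t by auto
  show ?thesis
  proof (cases "z mod t = 0")
    case True
    then have "z - 1 = t * (z div t - 1) + (t - 1)" using z by (simp add: algebra_simps)
    then have "(z - 1) div t = z div t - 1" using t by (intro int_div_pos_eq[where r="t - 1"]) auto
    then show ?thesis using True by simp
  next
    case False
    then have "z - 1 = t * (z div t) + (z mod t - 1)" using z by (simp add: algebra_simps)
    then have "(z - 1) div t = z div t" using m False by (intro int_div_pos_eq[where r="z mod t - 1"]) auto
    then show ?thesis using False by simp
  qed
qed

lemma div_small:
  fixes r i t :: int assumes "0 \<le> r" "r < t" "0 \<le> i" "i < t"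
  shows "(r - i) div t = (if i \<le> r then 0 else -1)"
proof (cases "i \<le> r")
  case True then show ?thesis using assms by (simp add: div_pos_pos_trivial)
next
  case False
  have "r - i = t * (-1) + (t + r - i)" by linarith
  then have "(r - i) div t = -1" using assms False by (intro int_div_pos_eq[where r="t + r - i"]) auto
  then show ?thesis using False by simp
qed

lemma tele:
  fixes P :: "int \<Rightarrow> int" assumes "lo \<le> L"
  shows "(\<Sum>q\<in>{lo..<L}. P (q + 1) - P q) = P L - P lo"
  using assms
proof (induction L rule: int_ge_induct)
  case base then show ?case by simp
next
  case (step L)
  have "{lo..<L + 1} = insert L {lo..<L}" using step by auto
  then show ?case using step by simp
qed

lemma sum_mod_cong:
  fixes f g :: "'a \<Rightarrow> int"
  assumes "\<And>x. x \<in> A \<Longrightarrow> f x mod n = g x mod n"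
  shows "sum f A mod n = sum g A mod n"
proof -
  have "sum f A mod n = (\<Sum>x\<in>A. f x mod n) mod n" by (simp add: mod_sum_eq)
  also have "\<dots> = (\<Sum>x\<in>A. g x mod n) mod n" using assms by simp
  also have "\<dots> = sum g A mod n" by (simp add: mod_sum_eq)
  finally show ?thesis .
qed

lemma tele_mod:
  fixes P h :: "int \<Rightarrow> int" assumes "lo \<le> L" and "\<And>q. (P (q + 1) - P q - h q) mod 4 = 0"
  shows "(\<Sum>q\<in>{lo..<L}. h q) mod 4 = (P L - P lo) mod 4"
proof -
  have "(\<Sum>q\<in>{lo..<L}. h q) mod 4 = (\<Sum>q\<in>{lo..<L}. P (q + 1) - P q) mod 4"
    using assms(2) by (intro sum_mod_cong) (metis mod_eq_dvd_iff dvd_eq_mod_eq_0 minus_diff_eq dvd_minus_iff)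
  then show ?thesis using tele[OF assms(1)] by simp
qed

lemma two_half: "2 * (((z::int) + 1) div 2) = z + z mod 2"
  by presburger

lemma mod2_sq: "((z::int) mod 2) mod 4 = z ^ 2 mod 4"
proof (cases "even z")
  case True
  then obtain w where "z = 2 * w" by blast
  then show ?thesis by (simp add: power2_eq_square algebra_simps)
next
  case False
  then obtain w where w: "z = 2 * w + 1" using oddE by blast
  then have "z ^ 2 = 4 * (w * w + w) + 1" by (simp add: power2_eq_square algebra_simps)
  then have "z ^ 2 mod 4 = 1" by presburger
  moreover have "z mod 2 = 1" using False by presburger
  ultimately show ?thesis by simp
qed

lemma res4: "(x::int) mod 4 = 0 \<or> x mod 4 = 1 \<or> x mod 4 = 2 \<or> x mod 4 = 3"
  by presburger



lemma stepA0:
  fixes r q t :: int assumes t: "t mod 4 = 1"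
  shows "((q + 1 + r) ^ 3 - (q + r) ^ 3 + (- 1) - (r + t * q) - (r + t * q) ^ 2) mod 4 = 0"
proof -
  have cq: "[q = q mod 4] (mod 4)" "[r = r mod 4] (mod 4)" "[t = 1] (mod 4)"
    using t by (auto simp: cong_def)
  have "[(q + 1 + r) ^ 3 - (q + r) ^ 3 + (- 1) - (r + t * q) - (r + t * q) ^ 2
      = (q mod 4 + 1 + r mod 4) ^ 3 - (q mod 4 + r mod 4) ^ 3 + (- 1) - (r mod 4 + 1 * (q mod 4)) - (r mod 4 + 1 * (q mod 4)) ^ 2] (mod 4)"
    by (intro cong_add cong_diff cong_mult cong_pow cong_refl cq)
  moreover have "((q mod 4 + 1 + r mod 4) ^ 3 - (q mod 4 + r mod 4) ^ 3 + (- 1) - (r mod 4 + 1 * (q mod 4)) - (r mod 4 + 1 * (q mod 4)) ^ 2) mod 4 = 0"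
    using res4[of q] res4[of r] by (elim disjE) simp_all
  ultimately show ?thesis by (simp add: cong_def)
qed



lemma alt_sum: "(\<Sum>j<n. (-1::int) ^ j) = (if odd n then 1 else 0)"
  by (induction n) auto

lemma sum_ind_card: "finite A \<Longrightarrow> (\<Sum>x\<in>A. if P x then 1 else 0) = int (card {x\<in>A. P x})"
  by (simp add: sum.inter_filter[symmetric])

lemma num_odd_cells:
  assumes P: "is_partition ps"
  shows "int (num_odd ps) = (\<Sum>(i, j)\<in>cells ps. (-1::int) ^ j)"
proof -
  have "(\<Sum>(i, j)\<in>cells ps. (-1::int) ^ j) = (\<Sum>i<length ps. \<Sum>j<lam ps i. (-1::int) ^ j)"
    unfolding cells_Sigma by (simp add: sum.Sigma)
  also have "\<dots> = (\<Sum>i<length ps. if odd (ps ! i) then 1 else 0)"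
    by (intro sum.cong refl) (simp add: alt_sum lam_def)
  also have "\<dots> = int (card {i\<in>{..<length ps}. odd (ps ! i)})" by (simp add: sum_ind_card)
  also have "\<dots> = int (num_odd ps)"
  proof -
    have "{i\<in>{..<length ps}. odd (ps ! i)} = {i. i < length ps \<and> odd (ps ! i)}" by auto
    then show ?thesis unfolding num_odd_def length_filter_conv_card by simp
  qed
  finally show ?thesis by simp
qed

lemma downclosed_nat:
  fixes S :: "nat set"
  assumes "finite S" "\<And>i i'. i \<in> S \<Longrightarrow> i' \<le> i \<Longrightarrow> i' \<in> S"
  shows "S = {..<card S}"
proof (cases "S = {}")
  case False
  define k where "k = Max S"
  have kS: "k \<in> S" unfolding k_def using Max_in assms(1) False by blast
  have "S = {..k}"
  proof
    show "S \<subseteq> {..k}" unfolding k_def using Max_ge assms(1) by auto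
    show "{..k} \<subseteq> S" using assms(2) kS by auto
  qed
  then show ?thesis by (simp add: lessThan_Suc_atMost)
qed simp

lemma num_odd_conj:
  assumes P: "is_partition ps"
  shows "int (num_odd (conj_part ps)) = (\<Sum>(i, j)\<in>cells ps. (-1::int) ^ i)"
proof -
  define h where "h = (if ps = [] then 0 else hd ps)"
  define C where "C j = {i. i < length ps \<and> j < ps ! i}" for j
  have finC: "finite (C j)" for j unfolding C_def by simp
  have cl: "length (filter (\<lambda>p. j < p) ps) = card (C j)" for j
    unfolding C_def length_filter_conv_card by simp
  have Cdown: "C j = {..<card (C j)}" for j
  proof (rule downclosed_nat[OF finC])
    fix i i' assume "i \<in> C j" "i' \<le> i"
    then show "i' \<in> C j" unfolding C_def using lam_antimono[OF P, of i' i] by (auto simp: lam_def)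
  qed
  have hbound: "i < length ps \<Longrightarrow> ps ! i \<le> h" for i
    using lam_antimono[OF P, of 0 i] unfolding h_def lam_def by (cases ps) auto
  have cellsC: "cells ps = (\<lambda>(j, i). (i, j)) ` Sigma {..<h} C"
  proof
    show "cells ps \<subseteq> (\<lambda>(j, i). (i, j)) ` Sigma {..<h} C"
    proof
      fix x assume "x \<in> cells ps"
      then obtain i j where x: "x = (i, j)" "i < length ps" "j < ps ! i" unfolding cells_def by auto
      then have "j < h" using hbound[of i] by simp
      then show "x \<in> (\<lambda>(j, i). (i, j)) ` Sigma {..<h} C" using x unfolding C_def by force
    qed
    show "(\<lambda>(j, i). (i, j)) ` Sigma {..<h} C \<subseteq> cells ps" unfolding C_def cells_def by auto
  qed
  have inj: "inj_on (\<lambda>(j, i). (i::nat, j::nat)) (Sigma {..<h} C)" by (auto simp: inj_on_def)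
  have "(\<Sum>(i, j)\<in>cells ps. (-1::int) ^ i) = (\<Sum>(j, i)\<in>Sigma {..<h} C. (-1::int) ^ i)"
    unfolding cellsC by (subst sum.reindex[OF inj]) (simp add: case_prod_beta comp_def)
  also have "\<dots> = (\<Sum>j<h. \<Sum>i\<in>C j. (-1::int) ^ i)"
    using finC by (simp add: sum.Sigma)
  also have "\<dots> = (\<Sum>j<h. if odd (card (C j)) then 1 else 0)"
    by (intro sum.cong refl) (subst Cdown, simp add: alt_sum)
  also have "\<dots> = int (card {j\<in>{..<h}. odd (card (C j))})" by (simp add: sum_ind_card)
  also have "\<dots> = int (num_odd (conj_part ps))"
  proof -
    have "{j\<in>{..<h}. odd (card (C j))} = {j. j < length (map (\<lambda>j. length (filter (\<lambda>p. j < p) ps)) [0..<h]) \<and>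
      odd (map (\<lambda>j. length (filter (\<lambda>p. j < p) ps)) [0..<h] ! j)}" by (auto simp: cl)
    then show ?thesis
      unfolding num_odd_def conj_part_def h_def[symmetric] length_filter_conv_card by simp
  qed
  finally show ?thesis by simp
qed

lemma srank_mod:
  assumes P: "is_partition ps"
  shows "srank ps mod 4 = (\<Sum>(i, j)\<in>cells ps. 2 * ((int j - int i) mod 2)) mod 4"
proof -
  have "srank ps = (\<Sum>(i, j)\<in>cells ps. (-1::int) ^ j - (-1) ^ i)"
    unfolding srank_def num_odd_cells[OF P] num_odd_conj[OF P]
    by (simp add: sum_subtractf case_prod_beta)
  also have "\<dots> mod 4 = (\<Sum>(i, j)\<in>cells ps. 2 * ((int j - int i) mod 2)) mod 4"
  proof (rule sum_mod_cong)
    fix x assume "x \<in> cells ps"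
    obtain i j where x: "x = (i, j)" by force
    have "((-1::int) ^ j - (-1) ^ i) mod 4 = (2 * ((int j - int i) mod 2)) mod 4"
    proof -
      have d: "(int j - int i) mod 2 = (int (j mod 2) - int (i mod 2)) mod 2"
        by (simp add: mod_diff_eq of_nat_mod)
      have pj: "(-1::int) ^ j = (if even j then 1 else -1)" by simp
      have pi: "(-1::int) ^ i = (if even i then 1 else -1)" by simp
      show ?thesis unfolding d pj pi
        by (cases "even i"; cases "even j") (simp_all add: even_iff_mod_2_eq_zero odd_iff_mod_2_eq_one)
    qed
    then show "(case x of (i, j) \<Rightarrow> (-1::int) ^ j - (-1) ^ i) mod 4 =
        (case x of (i, j) \<Rightarrow> 2 * ((int j - int i) mod 2)) mod 4" using x by simp
  qed
  finally show ?thesis .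
qed



lemma nvec_L:
  assumes t: "t \<ge> 2" and i: "i < t" and K0: "0 \<le> K" and LK: "\<forall>\<rho><t. - K \<le> L \<rho>"
    and sumL: "(\<Sum>\<rho><t. L \<rho>) = 0"
    and H: "\<forall>(f::int \<Rightarrow> int) G. (\<forall>y. G y - G (y - 1) = f y) \<longrightarrow>
      (\<Sum>(i, j)\<in>cells ps. f (int j - int i)) =
      (\<Sum>\<rho><t. (\<Sum>q\<in>{- K..<L \<rho>}. G (int \<rho> + int t * q)) - (\<Sum>q\<in>{- K..<0}. G (int \<rho> + int t * q)))"
  shows "nvec t ps i = L i"
proof -
  define i' where "i' = (i + 1) mod t"
  have i't: "i' < t" unfolding i'_def using t by simp
  define f :: "int \<Rightarrow> int" where "f y = (if y mod int t = int i then 1 else 0) - (if y mod int t = int i' then 1 else 0)" for y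
  define G :: "int \<Rightarrow> int" where "G y = (y - int i) div int t - (y - int i') div int t" for y
  have t0: "int t > 0" using t by simp
  have modeq: "(y - int k) mod int t = 0 \<longleftrightarrow> y mod int t = int k" if "k < t" for y k
  proof -
    have "int k mod int t = int k" using that by simp
    then show ?thesis by (metis mod_eq_dvd_iff dvd_eq_mod_eq_0)
  qed
  have G: "\<forall>y. G y - G (y - 1) = f y"
  proof
    fix y :: int
    have "G y - G (y - 1) = ((y - int i) div int t - (y - int i - 1) div int t)
        - ((y - int i') div int t - (y - int i' - 1) div int t)"
      unfolding G_def by (simp add: algebra_simps)
    also have "\<dots> = f y" unfolding f_def divstep[OF t0] modeq[OF i] modeq[OF i't] by simp
    finally show "G y - G (y - 1) = f y" .
  qed
  have rc: "int (res_count t ps k) = (\<Sum>(a, b)\<in>cells ps. if (int b - int a) mod int t = int k then 1 else 0)" for k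
  proof -
    have "{(a, b) \<in> cells ps. (int b - int a) mod int t = int k} =
        {x \<in> cells ps. (case x of (a, b) \<Rightarrow> (int b - int a) mod int t = int k)}" by auto
    then show ?thesis unfolding res_count_def
      by (simp add: sum_ind_card case_prod_beta)
  qed
  have "nvec t ps i = (\<Sum>(a, b)\<in>cells ps. f (int b - int a))"
    unfolding nvec_def rc f_def i'_def by (simp add: sum_subtractf case_prod_beta)
  also have "\<dots> = (\<Sum>\<rho><t. (\<Sum>q\<in>{- K..<L \<rho>}. G (int \<rho> + int t * q)) - (\<Sum>q\<in>{- K..<0}. G (int \<rho> + int t * q)))"
    using H G by blast
  also have "\<dots> = (\<Sum>\<rho><t. ((int \<rho> - int i) div int t - (int \<rho> - int i') div int t) * L \<rho>)"
  proof (intro sum.cong refl)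
    fix \<rho> assume r: "\<rho> \<in> {..<t}"
    define c where "c = (int \<rho> - int i) div int t - (int \<rho> - int i') div int t"
    have Gc: "G (int \<rho> + int t * q) = c" for q
    proof -
      have "G (int \<rho> + int t * q) = (int \<rho> - int i + q * int t) div int t - (int \<rho> - int i' + q * int t) div int t"
        unfolding G_def by (simp add: algebra_simps)
      also have "\<dots> = c" unfolding c_def using t0 by simp
      finally show ?thesis .
    qed
    have "- K \<le> L \<rho>" using LK r by simp
    then show "(\<Sum>q\<in>{- K..<L \<rho>}. G (int \<rho> + int t * q)) - (\<Sum>q\<in>{- K..<0}. G (int \<rho> + int t * q)) = c * L \<rho>"
      using K0 unfolding Gc by (simp add: algebra_simps)
  qed
  also have "\<dots> = L i"
  proof (cases "i + 1 < t")
    case True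
    then have i'i: "i' = i + 1" unfolding i'_def by simp
    have "(\<Sum>\<rho><t. ((int \<rho> - int i) div int t - (int \<rho> - int i') div int t) * L \<rho>) =
        (\<Sum>\<rho><t. if \<rho> = i then L \<rho> else 0)"
    proof (intro sum.cong refl)
      fix \<rho> assume "\<rho> \<in> {..<t}"
      then show "((int \<rho> - int i) div int t - (int \<rho> - int i') div int t) * L \<rho> = (if \<rho> = i then L \<rho> else 0)"
        using div_small[of "int \<rho>" "int t" "int i"] div_small[of "int \<rho>" "int t" "int i'"] i i't i'i by auto
    qed
    then show ?thesis using i by simp
  next
    case False
    then have ti: "t = Suc i" using i by simp
    then have i'0: "i' = 0" unfolding i'_def by simp
    have "(\<Sum>\<rho><t. ((int \<rho> - int i) div int t - (int \<rho> - int i') div int t) * L \<rho>) =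
        (\<Sum>\<rho><t. if \<rho> < i then - L \<rho> else 0)"
    proof (intro sum.cong refl)
      fix \<rho> assume "\<rho> \<in> {..<t}"
      then show "((int \<rho> - int i) div int t - (int \<rho> - int i') div int t) * L \<rho> = (if \<rho> < i then - L \<rho> else 0)"
        using div_small[of "int \<rho>" "int t" "int i"] div_small[of "int \<rho>" "int t" "int i'"] i i't i'0 by auto
    qed
    also have "\<dots> = - (\<Sum>\<rho><i. L \<rho>)" using ti by (simp add: sum_negf)
    also have "\<dots> = L i" using sumL ti by simp
    finally show ?thesis .
  qed
  finally show ?thesis .
qed



lemma stepA1:
  fixes r q t :: int assumes t: "t mod 4 = 3"
  shows "((q + 1 - r + 1) ^ 3 - (q - r + 1) ^ 3 + 1 - (r + t * q) - (r + t * q) ^ 2) mod 4 = 0"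
proof -
  have cq: "[q = q mod 4] (mod 4)" "[r = r mod 4] (mod 4)" "[t = 3] (mod 4)"
    using t by (auto simp: cong_def)
  have "[(q + 1 - r + 1) ^ 3 - (q - r + 1) ^ 3 + 1 - (r + t * q) - (r + t * q) ^ 2
      = (q mod 4 + 1 - r mod 4 + 1) ^ 3 - (q mod 4 - r mod 4 + 1) ^ 3 + 1 - (r mod 4 + 3 * (q mod 4)) - (r mod 4 + 3 * (q mod 4)) ^ 2] (mod 4)"
    by (intro cong_add cong_diff cong_mult cong_pow cong_refl cq)
  moreover have "((q mod 4 + 1 - r mod 4 + 1) ^ 3 - (q mod 4 - r mod 4 + 1) ^ 3 + 1 - (r mod 4 + 3 * (q mod 4)) - (r mod 4 + 3 * (q mod 4)) ^ 2) mod 4 = 0"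
    using res4[of q] res4[of r] by (elim disjE) simp_all
  ultimately show ?thesis by (simp add: cong_def)
qed

lemma stepB0:
  fixes r q t :: int assumes t: "t mod 4 = 0"
  shows "((r ^ 2 + r) * (q + 1) - (r ^ 2 + r) * q - (r + t * q) - (r + t * q) ^ 2) mod 4 = 0"
proof -
  have cq: "[q = q mod 4] (mod 4)" "[r = r mod 4] (mod 4)" "[t = 0] (mod 4)"
    using t by (auto simp: cong_def)
  have "[(r ^ 2 + r) * (q + 1) - (r ^ 2 + r) * q - (r + t * q) - (r + t * q) ^ 2
      = ((r mod 4) ^ 2 + r mod 4) * (q mod 4 + 1) - ((r mod 4) ^ 2 + r mod 4) * (q mod 4) - (r mod 4 + 0 * (q mod 4)) - (r mod 4 + 0 * (q mod 4)) ^ 2] (mod 4)"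
    by (intro cong_add cong_diff cong_mult cong_pow cong_refl cq)
  moreover have "(((r mod 4) ^ 2 + r mod 4) * (q mod 4 + 1) - ((r mod 4) ^ 2 + r mod 4) * (q mod 4) - (r mod 4 + 0 * (q mod 4)) - (r mod 4 + 0 * (q mod 4)) ^ 2) mod 4 = 0"
    using res4[of q] res4[of r] by (elim disjE) simp_all
  ultimately show ?thesis by (simp add: cong_def)
qed

lemma stepB1:
  fixes r q t :: int assumes t: "t mod 4 = 2"
  shows "((q + 1) ^ 2 + (r ^ 2 + r) * (q + 1) - (q ^ 2 + (r ^ 2 + r) * q) - 1 - (r + t * q) - (r + t * q) ^ 2) mod 4 = 0"
proof -
  have cq: "[q = q mod 4] (mod 4)" "[r = r mod 4] (mod 4)" "[t = 2] (mod 4)"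
    using t by (auto simp: cong_def)
  have "[(q + 1) ^ 2 + (r ^ 2 + r) * (q + 1) - (q ^ 2 + (r ^ 2 + r) * q) - 1 - (r + t * q) - (r + t * q) ^ 2
      = (q mod 4 + 1) ^ 2 + ((r mod 4) ^ 2 + r mod 4) * (q mod 4 + 1) - ((q mod 4) ^ 2 + ((r mod 4) ^ 2 + r mod 4) * (q mod 4)) - 1 - (r mod 4 + 2 * (q mod 4)) - (r mod 4 + 2 * (q mod 4)) ^ 2] (mod 4)"
    by (intro cong_add cong_diff cong_mult cong_pow cong_refl cq)
  moreover have "((q mod 4 + 1) ^ 2 + ((r mod 4) ^ 2 + r mod 4) * (q mod 4 + 1) - ((q mod 4) ^ 2 + ((r mod 4) ^ 2 + r mod 4) * (q mod 4)) - 1 - (r mod 4 + 2 * (q mod 4)) - (r mod 4 + 2 * (q mod 4)) ^ 2) mod 4 = 0"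
    using res4[of q] res4[of r] by (elim disjE) simp_all
  ultimately show ?thesis by (simp add: cong_def)
qed

lemma block_cube: "((x::int) ^ 3 + (x + 1) ^ 3 + (x + 2) ^ 3 + (x + 3) ^ 3) mod 4 = 0"
proof -
  have cq: "[x = x mod 4] (mod 4)" by (auto simp: cong_def)
  have "[(x::int) ^ 3 + (x + 1) ^ 3 + (x + 2) ^ 3 + (x + 3) ^ 3 =
      (x mod 4) ^ 3 + (x mod 4 + 1) ^ 3 + (x mod 4 + 2) ^ 3 + (x mod 4 + 3) ^ 3] (mod 4)"
    by (intro cong_add cong_diff cong_mult cong_pow cong_refl cq)
  moreover have "((x mod 4) ^ 3 + (x mod 4 + 1) ^ 3 + (x mod 4 + 2) ^ 3 + (x mod 4 + 3) ^ 3) mod 4 = 0"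
    using res4[of x] by (elim disjE) simp_all
  ultimately show ?thesis by (simp add: cong_def)
qed

lemma bridge:
  fixes D z :: int assumes "(D - z - z ^ 2) mod 4 = 0"
  shows "(D - 2 * ((z + 1) div 2)) mod 4 = 0"
proof -
  have "(D - 2 * ((z + 1) div 2)) mod 4 = (D - z - (z mod 2) mod 4) mod 4"
    unfolding two_half by (simp add: algebra_simps mod_diff_right_eq)
  also have "\<dots> = (D - z - z ^ 2 mod 4) mod 4" by (simp add: mod2_sq)
  also have "\<dots> = (D - z - z ^ 2) mod 4" by (simp add: mod_diff_right_eq)
  finally show ?thesis using assms by simp
qed

lemma per4:
  fixes g :: "nat \<Rightarrow> int"
  assumes blk: "\<And>j. (g j + g (j + 1) + g (j + 2) + g (j + 3)) mod 4 = 0"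
  shows "(\<Sum>\<rho><4 * k + r. g \<rho>) mod 4 = (\<Sum>\<rho><r. g \<rho>) mod 4"
proof (induction k)
  case 0 then show ?case by simp
next
  case (Suc k)
  have e: "4 * Suc k + r = Suc (Suc (Suc (Suc (4 * k + r))))" by simp
  have "(\<Sum>\<rho><4 * Suc k + r. g \<rho>) = (\<Sum>\<rho><4 * k + r. g \<rho>) +
      (g (4 * k + r) + g (4 * k + r + 1) + g (4 * k + r + 2) + g (4 * k + r + 3))"
    unfolding e by (simp add: algebra_simps numeral_eq_Suc)
  then have "(\<Sum>\<rho><4 * Suc k + r. g \<rho>) mod 4 = ((\<Sum>\<rho><4 * k + r. g \<rho>) mod 4 +
      (g (4 * k + r) + g (4 * k + r + 1) + g (4 * k + r + 2) + g (4 * k + r + 3)) mod 4) mod 4"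
    by (simp add: mod_add_eq)
  then show ?case using blk Suc by simp
qed

lemma runner:
  fixes P h :: "int \<Rightarrow> int"
  assumes "- K \<le> L" "0 \<le> K" "\<And>q. (P (q + 1) - P q - h q) mod 4 = 0"
  shows "((\<Sum>q\<in>{- K..<L}. h q) - (\<Sum>q\<in>{- K..<0}. h q)) mod 4 = (P L - P 0) mod 4"
proof -
  have a: "(\<Sum>q\<in>{- K..<L}. h q) mod 4 = (P L - P (- K)) mod 4" by (rule tele_mod) (use assms in auto)
  have b: "(\<Sum>q\<in>{- K..<0}. h q) mod 4 = (P 0 - P (- K)) mod 4" by (rule tele_mod) (use assms in auto)
  have "((\<Sum>q\<in>{- K..<L}. h q) - (\<Sum>q\<in>{- K..<0}. h q)) mod 4 =
      ((\<Sum>q\<in>{- K..<L}. h q) mod 4 - (\<Sum>q\<in>{- K..<0}. h q) mod 4) mod 4" by (simp add: mod_diff_eq)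
  also have "\<dots> = ((P L - P (- K)) mod 4 - (P 0 - P (- K)) mod 4) mod 4" using a b by simp
  also have "\<dots> = (P L - P 0) mod 4" by (simp add: mod_diff_eq)
  finally show ?thesis .
qed



theorem theorem4:
  fixes t :: nat and \<kappa> :: "nat list" and a :: int
  assumes "t \<ge> 2" and "is_core t \<kappa>" and "a \<in> {0, 1}"
  shows "(int t mod 4 = (1 + 2 * a) mod 4 \<longrightarrow>
           srank \<kappa> mod 4 =
             (\<Sum>i<t. (nvec t \<kappa> i + (1 - 2 * a) * int i + a) ^ 3) mod 4)
       \<and> (int t mod 4 = (2 * a) mod 4 \<longrightarrow>
           srank \<kappa> mod 4 =
             (\<Sum>i<t. a * (nvec t \<kappa> i)\<^sup>2 + (int i ^ 2 + int i) * nvec t \<kappa> i) mod 4)"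
proof -
  have P: "is_partition \<kappa>" using assms(2) is_core_def by blast
  obtain K L where K0: "0 \<le> K" and LK: "\<forall>\<rho><t. - K \<le> L \<rho>" and sumL: "(\<Sum>\<rho><t. L \<rho>) = 0"
    and H: "\<forall>(f::int \<Rightarrow> int) G. (\<forall>y. G y - G (y - 1) = f y) \<longrightarrow>
      (\<Sum>(i, j)\<in>cells \<kappa>. f (int j - int i)) =
      (\<Sum>\<rho><t. (\<Sum>q\<in>{- K..<L \<rho>}. G (int \<rho> + int t * q)) - (\<Sum>q\<in>{- K..<0}. G (int \<rho> + int t * q)))"
    using core_sum[OF assms(2) assms(1)] by blast
  have nv: "i < t \<Longrightarrow> nvec t \<kappa> i = L i" for i
    by (rule nvec_L[OF assms(1) _ K0 LK sumL H])
  define h where "h \<rho> q = 2 * ((int \<rho> + int t * q + 1) div 2)" for \<rho> :: nat and q :: int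
  have Gstep: "\<forall>y::int. 2 * ((y + 1) div 2) - 2 * ((y - 1 + 1) div 2) = 2 * (y mod 2)"
    by presburger
  have HH: "(\<Sum>(i, j)\<in>cells \<kappa>. 2 * ((int j - int i) mod 2)) =
      (\<Sum>\<rho><t. (\<Sum>q\<in>{- K..<L \<rho>}. h \<rho> q) - (\<Sum>q\<in>{- K..<0}. h \<rho> q))"
    unfolding h_def by (rule H[rule_format, of "\<lambda>y. 2 * ((y + 1) div 2)" "\<lambda>y. 2 * (y mod 2)"]) (use Gstep in simp)
  have sr: "srank \<kappa> mod 4 = (\<Sum>\<rho><t. (\<Sum>q\<in>{- K..<L \<rho>}. h \<rho> q) - (\<Sum>q\<in>{- K..<0}. h \<rho> q)) mod 4"
    using srank_mod[OF P] HH by simp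
  have gen: "srank \<kappa> mod 4 = (\<Sum>\<rho><t. Q \<rho> (L \<rho>) - Q \<rho> 0) mod 4"
    if stp: "\<And>\<rho> q. (Q \<rho> (q + 1) - Q \<rho> q - h \<rho> q) mod 4 = 0" for Q :: "nat \<Rightarrow> int \<Rightarrow> int"
    unfolding sr
  proof (rule sum_mod_cong)
    fix \<rho> assume "\<rho> \<in> {..<t}"
    then show "((\<Sum>q\<in>{- K..<L \<rho>}. h \<rho> q) - (\<Sum>q\<in>{- K..<0}. h \<rho> q)) mod 4 = (Q \<rho> (L \<rho>) - Q \<rho> 0) mod 4"
      using LK K0 stp by (intro runner) auto
  qed
  have tm: "int t mod 4 = int (t mod 4)" by (simp add: zmod_int)
  show ?thesis
  proof (intro conjI impI)
    assume A: "int t mod 4 = (1 + 2 * a) mod 4"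
    show "srank \<kappa> mod 4 = (\<Sum>i<t. (nvec t \<kappa> i + (1 - 2 * a) * int i + a) ^ 3) mod 4"
    proof (cases "a = 0")
      case True
      then have t1: "int t mod 4 = 1" using A by simp
      define Q where "Q \<rho> q = (q + int \<rho>) ^ 3 + (- 1) * q" for \<rho> :: nat and q :: int
      have "srank \<kappa> mod 4 = (\<Sum>\<rho><t. Q \<rho> (L \<rho>) - Q \<rho> 0) mod 4"
      proof (rule gen)
        fix \<rho> q
        have "((q + 1 + int \<rho>) ^ 3 - (q + int \<rho>) ^ 3 + (- 1) - 2 * ((int \<rho> + int t * q + 1) div 2)) mod 4 = 0"
          by (rule bridge[OF stepA0[OF t1]])
        moreover have "Q \<rho> (q + 1) - Q \<rho> q = (q + 1 + int \<rho>) ^ 3 - (q + int \<rho>) ^ 3 + (- 1)"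
          unfolding Q_def by (simp add: algebra_simps)
        ultimately show "(Q \<rho> (q + 1) - Q \<rho> q - h \<rho> q) mod 4 = 0" unfolding h_def by simp
      qed
      also have "(\<Sum>\<rho><t. Q \<rho> (L \<rho>) - Q \<rho> 0) = (\<Sum>\<rho><t. (L \<rho> + int \<rho>) ^ 3) - (\<Sum>\<rho><t. L \<rho>) - (\<Sum>\<rho><t. (int \<rho>) ^ 3)"
        unfolding Q_def by (simp add: sum_subtractf sum.distrib)
      also have "\<dots> mod 4 = (\<Sum>\<rho><t. (L \<rho> + int \<rho>) ^ 3) mod 4"
      proof -
        have "t mod 4 = 1" using t1 tm by simp
        then obtain k where tk: "t = 4 * k + 1" by (metis div_mult_mod_eq mult.commute)
        have blk: "(int j ^ 3 + int (j + 1) ^ 3 + int (j + 2) ^ 3 + int (j + 3) ^ 3) mod 4 = 0" for j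
          using block_cube[of "int j"] by (simp add: add.commute)
        have "(\<Sum>\<rho><4 * k + 1. (int \<rho>) ^ 3) mod 4 = (\<Sum>\<rho><1. (int \<rho>) ^ 3) mod 4"
          by (rule per4[of "\<lambda>\<rho>. (int \<rho>) ^ 3" k 1]) (rule blk)
        then have S0: "(\<Sum>\<rho><t. (int \<rho>) ^ 3) mod 4 = 0" using tk by simp
        show ?thesis using sumL mod_diff_right_eq[of "\<Sum>\<rho><t. (L \<rho> + int \<rho>) ^ 3" "\<Sum>\<rho><t. (int \<rho>) ^ 3" 4] S0
          by simp
      qed
      also have "(\<Sum>\<rho><t. (L \<rho> + int \<rho>) ^ 3) = (\<Sum>i<t. (nvec t \<kappa> i + (1 - 2 * a) * int i + a) ^ 3)"
        using nv True by (intro sum.cong refl) simp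
      finally show ?thesis .
    next
      case False
      then have a1: "a = 1" using assms(3) by simp
      then have t3: "int t mod 4 = 3" using A by simp
      define Q where "Q \<rho> q = (q - int \<rho> + 1) ^ 3 + q" for \<rho> :: nat and q :: int
      have "srank \<kappa> mod 4 = (\<Sum>\<rho><t. Q \<rho> (L \<rho>) - Q \<rho> 0) mod 4"
      proof (rule gen)
        fix \<rho> q
        have "((q + 1 - int \<rho> + 1) ^ 3 - (q - int \<rho> + 1) ^ 3 + 1 - 2 * ((int \<rho> + int t * q + 1) div 2)) mod 4 = 0"
          by (rule bridge[OF stepA1[OF t3]])
        moreover have "Q \<rho> (q + 1) - Q \<rho> q = (q + 1 - int \<rho> + 1) ^ 3 - (q - int \<rho> + 1) ^ 3 + 1"
          unfolding Q_def by (simp add: algebra_simps)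
        ultimately show "(Q \<rho> (q + 1) - Q \<rho> q - h \<rho> q) mod 4 = 0" unfolding h_def by simp
      qed
      also have "(\<Sum>\<rho><t. Q \<rho> (L \<rho>) - Q \<rho> 0) = (\<Sum>\<rho><t. (L \<rho> - int \<rho> + 1) ^ 3) + (\<Sum>\<rho><t. L \<rho>) - (\<Sum>\<rho><t. (1 - int \<rho>) ^ 3)"
        unfolding Q_def by (simp add: sum_subtractf sum.distrib)
      also have "\<dots> mod 4 = (\<Sum>\<rho><t. (L \<rho> - int \<rho> + 1) ^ 3) mod 4"
      proof -
        have "t mod 4 = 3" using t3 tm by simp
        have blk: "((1 - int j) ^ 3 + (1 - int (j + 1)) ^ 3 + (1 - int (j + 2)) ^ 3 + (1 - int (j + 3)) ^ 3) mod 4 = 0" for j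
        proof -
          define X where "X = (int j - 1) ^ 3 + (int j - 1 + 1) ^ 3 + (int j - 1 + 2) ^ 3 + (int j - 1 + 3) ^ 3"
          have e: "(1 - int j) ^ 3 + (1 - int (j + 1)) ^ 3 + (1 - int (j + 2)) ^ 3 + (1 - int (j + 3)) ^ 3 = - X"
            unfolding X_def by (simp add: algebra_simps power3_eq_cube)
          have "X mod 4 = 0" unfolding X_def by (rule block_cube)
          then have "4 dvd X" by (simp only: dvd_eq_mod_eq_0)
          then have "4 dvd - X" by simp
          then show ?thesis unfolding e by (simp only: dvd_eq_mod_eq_0)
        qed
        obtain k where tk: "t = 4 * k + 3" using \<open>t mod 4 = 3\<close> by (metis div_mult_mod_eq mult.commute)
        have "(\<Sum>\<rho><4 * k + 3. (1 - int \<rho>) ^ 3) mod 4 = (\<Sum>\<rho><3. (1 - int \<rho>) ^ 3) mod 4"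
          by (rule per4[of "\<lambda>\<rho>. (1 - int \<rho>) ^ 3" k 3]) (rule blk)
        also have "(\<Sum>\<rho><3. (1 - int \<rho>) ^ 3) = 0" by (simp add: numeral_3_eq_3)
        finally have S0: "(\<Sum>\<rho><t. (1 - int \<rho>) ^ 3) mod 4 = 0" using tk by simp
        show ?thesis using sumL mod_diff_right_eq[of "(\<Sum>\<rho><t. (L \<rho> - int \<rho> + 1) ^ 3) + (\<Sum>\<rho><t. L \<rho>)" "\<Sum>\<rho><t. (1 - int \<rho>) ^ 3" 4] S0
          by simp
      qed
      also have "(\<Sum>\<rho><t. (L \<rho> - int \<rho> + 1) ^ 3) = (\<Sum>i<t. (nvec t \<kappa> i + (1 - 2 * a) * int i + a) ^ 3)"
        using nv a1 by (intro sum.cong refl) simp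
      finally show ?thesis .
    qed
  next
    assume B: "int t mod 4 = (2 * a) mod 4"
    show "srank \<kappa> mod 4 = (\<Sum>i<t. a * (nvec t \<kappa> i)\<^sup>2 + (int i ^ 2 + int i) * nvec t \<kappa> i) mod 4"
    proof (cases "a = 0")
      case True
      then have t0: "int t mod 4 = 0" using B by simp
      define Q where "Q \<rho> q = (int \<rho> ^ 2 + int \<rho>) * q" for \<rho> :: nat and q :: int
      have "srank \<kappa> mod 4 = (\<Sum>\<rho><t. Q \<rho> (L \<rho>) - Q \<rho> 0) mod 4"
      proof (rule gen)
        fix \<rho> q
        have "((int \<rho> ^ 2 + int \<rho>) * (q + 1) - (int \<rho> ^ 2 + int \<rho>) * q - 2 * ((int \<rho> + int t * q + 1) div 2)) mod 4 = 0"
          by (rule bridge[OF stepB0[OF t0]])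
        then show "(Q \<rho> (q + 1) - Q \<rho> q - h \<rho> q) mod 4 = 0" unfolding h_def Q_def by simp
      qed
      also have "(\<Sum>\<rho><t. Q \<rho> (L \<rho>) - Q \<rho> 0) = (\<Sum>i<t. a * (nvec t \<kappa> i)\<^sup>2 + (int i ^ 2 + int i) * nvec t \<kappa> i)"
        using nv True unfolding Q_def by (intro sum.cong refl) simp
      finally show ?thesis .
    next
      case False
      then have a1: "a = 1" using assms(3) by simp
      then have t2: "int t mod 4 = 2" using B by simp
      define Q where "Q \<rho> q = q ^ 2 + (int \<rho> ^ 2 + int \<rho>) * q + (- 1) * q" for \<rho> :: nat and q :: int
      have "srank \<kappa> mod 4 = (\<Sum>\<rho><t. Q \<rho> (L \<rho>) - Q \<rho> 0) mod 4"
      proof (rule gen)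
        fix \<rho> q
        have "((q + 1) ^ 2 + (int \<rho> ^ 2 + int \<rho>) * (q + 1) - (q ^ 2 + (int \<rho> ^ 2 + int \<rho>) * q) - 1 - 2 * ((int \<rho> + int t * q + 1) div 2)) mod 4 = 0"
          by (rule bridge[OF stepB1[OF t2]])
        moreover have "Q \<rho> (q + 1) - Q \<rho> q = (q + 1) ^ 2 + (int \<rho> ^ 2 + int \<rho>) * (q + 1) - (q ^ 2 + (int \<rho> ^ 2 + int \<rho>) * q) - 1"
          unfolding Q_def by (simp add: algebra_simps)
        ultimately show "(Q \<rho> (q + 1) - Q \<rho> q - h \<rho> q) mod 4 = 0" unfolding h_def by simp
      qed
      also have "(\<Sum>\<rho><t. Q \<rho> (L \<rho>) - Q \<rho> 0) = (\<Sum>\<rho><t. (L \<rho>) ^ 2 + (int \<rho> ^ 2 + int \<rho>) * L \<rho>) - (\<Sum>\<rho><t. L \<rho>)"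
        unfolding Q_def by (simp add: sum_subtractf)
      also have "\<dots> = (\<Sum>i<t. a * (nvec t \<kappa> i)\<^sup>2 + (int i ^ 2 + int i) * nvec t \<kappa> i)"
        using nv a1 sumL by simp
      finally show ?thesis .
    qed
  qed
qed

end
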